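(* Let $\mu$ be a probability measure on $\mathbb{Z}$ and let $0<b<1/4$ and $0\le c<1$. If $|\hat{\mu}(t)|\le c$ for all $t$ with $b\le |t|<1/2$, then $$|\hat{\mu}(t)|\le 1-\frac{1-c^2}{8b^2}\,t^2\quad\text{for all } |t|\le b.$$
   Context: The Fourier transform of a probability measure $\mu$ on $\mathbb{Z}$ is $\hat{\mu}(t)=\sum_{k\in\mathbb{Z}}\mu(k)e^{2\pi ikt}$, $t\in[-1/2,1/2)$. *)

theory Defs
  imports "HOL-Probability.Probability"
begin

definition fourier_pmf :: "int pmf \<Rightarrow> real \<Rightarrow> complex" where
  "fourier_pmf \<mu> t = (\<Sum>\<^sub>\<infinity>k\<in>(UNIV::int set). complex_of_real (pmf \<mu> k) * exp (2 * pi * \<i> * of_int k * of_real t))"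

end

theory Submission
  imports Defs
begin

lemma fourier_expect:
  "fourier_pmf \<mu> t = measure_pmf.expectation \<mu> (\<lambda>k. exp (2 * pi * \<i> * of_int k * of_real t))"
proof -
  define g where "g = (\<lambda>k::int. exp (2 * pi * \<i> * of_int k * of_real t))"
  have n: "norm (g k) = 1" for k unfolding g_def by (simp add: norm_exp_eq_Re)
  have "measure_pmf.expectation \<mu> g = integral\<^sup>L (count_space UNIV) (\<lambda>k. pmf \<mu> k *\<^sub>R g k)"
    unfolding measure_pmf_eq_density by (subst integral_density) (auto simp: pmf_nonneg)
  also have "\<dots> = infsetsum (\<lambda>k. pmf \<mu> k *\<^sub>R g k) UNIV"
    by (simp add: infsetsum_def)
  also have "\<dots> = infsum (\<lambda>k. pmf \<mu> k *\<^sub>R g k) UNIV"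
  proof (rule infsetsum_infsum)
    have "Infinite_Sum.abs_summable_on (pmf \<mu>) UNIV"
      using pmf_abs_summable abs_summable_equivalent by blast
    then have "(\<lambda>k. pmf \<mu> k) summable_on UNIV" by simp
    then have "(\<lambda>k. norm (pmf \<mu> k *\<^sub>R g k)) summable_on UNIV" by (simp add: n)
    then show "Infinite_Set_Sum.abs_summable_on (\<lambda>k. pmf \<mu> k *\<^sub>R g k) UNIV"
      using abs_summable_equivalent by blast
  qed
  finally show ?thesis unfolding fourier_pmf_def g_def by (simp add: scaleR_conv_of_real)
qed

lemma pmf_integrable_bounded:
  fixes f :: "int \<Rightarrow> 'b::{banach, second_countable_topology}"
  assumes "\<And>k. norm (f k) \<le> B"
  shows "integrable (measure_pmf \<mu>) f"
  by (rule measure_pmf.integrable_const_bound[where B=B]) (auto simp: assms)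

lemma norm_e: "norm (exp (2 * pi * \<i> * of_int k * of_real t)) = 1"
  by (simp add: norm_exp_eq_Re)

lemma fourier_le1: "cmod (fourier_pmf \<mu> t) \<le> 1"
proof -
  have "cmod (fourier_pmf \<mu> t) \<le> measure_pmf.expectation \<mu> (\<lambda>k. norm (exp (2 * pi * \<i> * of_int k * of_real t)))"
    unfolding fourier_expect by (rule integral_norm_bound)
  also have "\<dots> = 1" by (simp add: norm_e)
  finally show ?thesis .
qed

lemma fourier_double: "2 * (cmod (fourier_pmf \<mu> t))^2 - 1 \<le> cmod (fourier_pmf \<mu> (2 * t))"
proof -
  define e where "e = (\<lambda>k::int. exp (2 * pi * \<i> * of_int k * of_real t))"
  define z where "z = fourier_pmf \<mu> t"
  define w where "w = (if z = 0 then 1 else cnj z / cmod z)"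
  have nw: "norm w = 1" unfolding w_def by (auto simp: norm_divide)
  have wz: "Re (w * z) = cmod z"
  proof (cases "z = 0")
    case False
    have "w * z = (z * cnj z) / of_real (cmod z)" unfolding w_def using False by simp
    also have "\<dots> = of_real (cmod z)" using False
      by (simp add: complex_norm_square[symmetric] power2_eq_square)
    finally show ?thesis by simp
  qed (simp add: w_def)
  have ne: "norm (e k) = 1" for k unfolding e_def by (rule norm_e)
  define X where "X = (\<lambda>k. Re (w * e k))"
  have nX: "norm (X k) \<le> 1" for k
    unfolding X_def by (metis abs_Re_le_cmod mult_cancel_right2 ne norm_mult nw real_norm_def)
  have intX: "integrable (measure_pmf \<mu>) X" by (rule pmf_integrable_bounded[OF nX])
  have intX2: "integrable (measure_pmf \<mu>) (\<lambda>k. (X k)^2)"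
    by (rule pmf_integrable_bounded[where B=1]) (simp add: abs_square_le_1 nX[unfolded real_norm_def])
  have inte: "integrable (measure_pmf \<mu>) e" using ne by (intro pmf_integrable_bounded[where B=1]) simp
  have zE: "z = measure_pmf.expectation \<mu> e" unfolding z_def e_def by (rule fourier_expect)
  have EX: "measure_pmf.expectation \<mu> X = cmod z"
  proof -
    have "measure_pmf.expectation \<mu> X = Re (measure_pmf.expectation \<mu> (\<lambda>k. w * e k))"
      unfolding X_def using inte by (subst integral_Re) auto
    also have "\<dots> = Re (w * z)" using zE by simp
    finally show ?thesis using wz by simp
  qed
  have e2: "exp (2 * pi * \<i> * of_int k * of_real (2*t)) = (e k)^2" for k
    unfolding e_def by (simp add: exp_double[symmetric] algebra_simps)
  have sq: "Re ((w * e k)^2) = 2 * (X k)^2 - 1" for k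
  proof -
    have "norm (w * e k) = 1" by (simp add: norm_mult nw ne)
    then have "(Re (w * e k))^2 + (Im (w * e k))^2 = 1"
      by (metis cmod_power2 one_power2)
    then show ?thesis unfolding X_def by (simp add: power2_eq_square algebra_simps)
  qed
  have "fourier_pmf \<mu> (2*t) = measure_pmf.expectation \<mu> (\<lambda>k. (e k)^2)"
    by (subst fourier_expect) (simp only: e2)
  then have "Re (w^2 * fourier_pmf \<mu> (2*t)) = Re (measure_pmf.expectation \<mu> (\<lambda>k. (w * e k)^2))"
    by (simp add: power_mult_distrib)
  also have "\<dots> = measure_pmf.expectation \<mu> (\<lambda>k. Re ((w * e k)^2))"
    by (subst integral_Re) (auto intro!: pmf_integrable_bounded[where B=1] simp: norm_mult norm_power nw ne)
  also have "\<dots> = measure_pmf.expectation \<mu> (\<lambda>k. 2 * (X k)^2 - 1)"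
    by (simp add: sq)
  also have "\<dots> = 2 * measure_pmf.expectation \<mu> (\<lambda>k. (X k)^2) - 1"
    using intX2 by (simp add: measure_pmf.prob_space)
  finally have A: "Re (w^2 * fourier_pmf \<mu> (2*t)) = 2 * measure_pmf.expectation \<mu> (\<lambda>k. (X k)^2) - 1" .
  have "0 \<le> measure_pmf.variance \<mu> X" by (rule measure_pmf.variance_positive)
  then have B: "(cmod z)^2 \<le> measure_pmf.expectation \<mu> (\<lambda>k. (X k)^2)"
    using measure_pmf.variance_eq[OF intX intX2] unfolding EX by linarith
  have "Re (w^2 * fourier_pmf \<mu> (2*t)) \<le> cmod (fourier_pmf \<mu> (2*t))"
    by (metis complex_Re_le_cmod mult_cancel_right1 norm_mult norm_power nw power_one)
  then show ?thesis using A B z_def by simp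
qed

lemma fourier_step: "1 - cmod (fourier_pmf \<mu> (2 * t)) \<le> 4 * (1 - cmod (fourier_pmf \<mu> t))"
proof -
  have "2 * (cmod (fourier_pmf \<mu> t))^2 - 1 \<le> cmod (fourier_pmf \<mu> (2 * t))" by (rule fourier_double)
  moreover have "0 \<le> (cmod (fourier_pmf \<mu> t) - 1)^2" by simp
  ultimately show ?thesis by (simp add: power2_eq_square algebra_simps)
qed

lemma fourier_iter: "1 - cmod (fourier_pmf \<mu> (2^n * t)) \<le> 4^n * (1 - cmod (fourier_pmf \<mu> t))"
proof (induction n)
  case 0 then show ?case by simp
next
  case (Suc n)
  have "1 - cmod (fourier_pmf \<mu> (2^Suc n * t)) = 1 - cmod (fourier_pmf \<mu> (2 * (2^n * t)))"
    by (simp add: mult.assoc)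
  also have "\<dots> \<le> 4 * (1 - cmod (fourier_pmf \<mu> (2^n * t)))" by (rule fourier_step)
  also have "\<dots> \<le> 4 * (4^n * (1 - cmod (fourier_pmf \<mu> t)))" using Suc by simp
  finally show ?case by simp
qed

lemma exists_scale:
  fixes s b :: real assumes "0 < s" "s \<le> b"
  shows "\<exists>n::nat. b \<le> 2^n * s \<and> 2^n * s < 2 * b"
proof -
  obtain m :: nat where "b / s < 2^m" using real_arch_pow[of 2 "b/s"] by auto
  then have ex: "b \<le> 2^m * s" using assms by (simp add: field_simps)
  define n where "n = (LEAST n::nat. b \<le> 2^n * s)"
  have n1: "b \<le> 2^n * s" unfolding n_def by (rule LeastI[of _ m]) (rule ex)
  have "2^n * s < 2 * b"
  proof (cases n)
    case 0 then show ?thesis using assms by simp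
  next
    case (Suc k)
    then have "\<not> b \<le> 2^k * s" using not_less_Least[of k "\<lambda>n. b \<le> 2^n * s"] n_def by auto
    then show ?thesis using Suc by simp
  qed
  then show ?thesis using n1 by blast
qed

theorem lemma2p1p5:
  fixes \<mu> :: "int pmf" and b c :: real
  assumes "0 < b" and "b < 1/4" and "0 \<le> c" and "c < 1"
    and "\<And>t. b \<le> \<bar>t\<bar> \<Longrightarrow> \<bar>t\<bar> < 1/2 \<Longrightarrow> cmod (fourier_pmf \<mu> t) \<le> c"
  shows "\<forall>t. \<bar>t\<bar> \<le> b \<longrightarrow> cmod (fourier_pmf \<mu> t) \<le> 1 - (1 - c^2) / (8 * b^2) * t^2"
proof (intro allI impI)
  fix t :: real assume tb: "\<bar>t\<bar> \<le> b"
  show "cmod (fourier_pmf \<mu> t) \<le> 1 - (1 - c^2) / (8 * b^2) * t^2"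
  proof (cases "t = 0")
    case True then show ?thesis using fourier_le1[of \<mu> 0] by simp
  next
    case False
    then have tpos: "0 < \<bar>t\<bar>" by simp
    obtain n :: nat where n1: "b \<le> 2^n * \<bar>t\<bar>" and n2: "2^n * \<bar>t\<bar> < 2 * b"
      using exists_scale[OF tpos tb] by blast
    have absT: "\<bar>2^n * t\<bar> = 2^n * \<bar>t\<bar>" by (simp add: abs_mult)
    have "cmod (fourier_pmf \<mu> (2^n * t)) \<le> c"
      using assms(5)[of "2^n * t"] n1 n2 assms(2) absT by simp
    then have I: "1 - c \<le> 4^n * (1 - cmod (fourier_pmf \<mu> t))"
      using fourier_iter[of \<mu> n t] by simp
    define r where "r = cmod (fourier_pmf \<mu> t)"
    have r1: "r \<le> 1" unfolding r_def by (rule fourier_le1)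
    define q where "q = (2::real)^n"
    have q4: "4^n = q^2" unfolding q_def by (simp add: power2_eq_square flip: power_mult_distrib)
    have qpos: "0 < q" unfolding q_def by simp
    have qt: "q * \<bar>t\<bar> < 2 * b" using n2 q_def by simp
    have "q^2 * t^2 \<le> 4 * b^2"
    proof -
      have "(q * \<bar>t\<bar>)^2 \<le> (2 * b)^2" using qt qpos tpos by (intro power_mono) auto
      then show ?thesis by (simp add: power_mult_distrib)
    qed
    have I2: "1 - c \<le> q^2 * (1 - r)" using I q4 r_def by simp
    have "(1 - c) * t^2 \<le> q^2 * t^2 * (1 - r)"
      using mult_right_mono[OF I2, of "t^2"] by (simp add: algebra_simps)
    also have "\<dots> \<le> 4 * b^2 * (1 - r)"
      using \<open>q^2 * t^2 \<le> 4 * b^2\<close> r1 by (intro mult_right_mono) auto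
    finally have K: "(1 - c) * t^2 \<le> 4 * b^2 * (1 - r)" .
    have "(1 - c^2) / (8 * b^2) * t^2 = (1 - c) * t^2 * ((1 + c) / 2) / (4 * b^2)"
      by (simp add: field_simps power2_eq_square)
    also have "\<dots> \<le> (1 - c) * t^2 / (4 * b^2)"
      using assms(3,4) by (intro divide_right_mono mult_left_mono) (auto intro: mult_left_mono)
    also have "\<dots> \<le> 1 - r" using K assms(1) by (simp add: divide_le_eq mult.commute)
    finally show ?thesis unfolding r_def by simp
  qed
qed

end
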